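(* Let $d,n\ge1$ and $\boldsymbol{x}_1,\dots,\boldsymbol{x}_n\in\mathbb{R}^d$, with $\boldsymbol{S}=\sum_{j=1}^n\boldsymbol{x}_j\boldsymbol{x}_j^\top$. There exist matrices $\boldsymbol{Q}_m,\boldsymbol{K}_m,\boldsymbol{V}_m\in\mathbb{R}^{2d\times2d}$, $m=1,2$, depending only on $d$ and $n$, and the matrix $\boldsymbol{W}=\begin{bmatrix}\boldsymbol{I}_d&\boldsymbol{O}_d\\ \boldsymbol{O}_d&\boldsymbol{O}_d\end{bmatrix}$, such that the following holds for every symmetric matrix $\boldsymbol{T}\in\mathbb{R}^{d\times d}$: if the 2-head full attention layer with normalized ReLU activation and parameters $\{\boldsymbol{Q}_m,\boldsymbol{K}_m,\boldsymbol{V}_m\}_{m=1}^2$ is applied to $\boldsymbol{H}=[\boldsymbol{h}_1,\dots,\boldsymbol{h}_n]$ with $\boldsymbol{h}_t=\begin{bmatrix}\boldsymbol{T}\boldsymbol{x}_t\\ \boldsymbol{x}_t\end{bmatrix}$, producing $\tilde{\boldsymbol{h}}_t$, then $$\tilde{\boldsymbol{h}}_t=\begin{bmatrix}\big(\boldsymbol{T}-\tfrac12\boldsymbol{T}\boldsymbol{S}\boldsymbol{T}\big)\boldsymbol{x}_t\\ \boldsymbol{x}_t\end{bmatrix}\quad\text{and}\quad \tilde{\boldsymbol{h}}_t+\boldsymbol{W}\tilde{\boldsymbol{h}}_t=\begin{bmatrix}\boldsymbol{T}'\boldsymbol{x}_t\\ \boldsymbol{x}_t\end{bmatrix}\ \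 (t\in[n]),$$ where $\boldsymbol{T}'=2\boldsymbol{T}-\boldsymbol{T}\boldsymbol{S}\boldsymbol{T}$, and $\boldsymbol{T}'$ is again symmetric. In particular, iterating this layer $k$ times starting from $\boldsymbol{T}^{(0)}=\alpha\boldsymbol{S}$ produces columns $\begin{bmatrix}\boldsymbol{M}_k\boldsymbol{x}_t\\ \boldsymbol{x}_t\end{bmatrix}$, where $\boldsymbol{M}_0=\alpha\boldsymbol{S}$ and $\boldsymbol{M}_{j}=2\boldsymbol{M}_{j-1}-\boldsymbol{M}_{j-1}\boldsymbol{S}\boldsymbol{M}_{j-1}$ for $j\ge1$.
   Context: A full attention layer with $M$ heads and normalized ReLU activation, with parameters $\{\boldsymbol{Q}_m,\boldsymbol{K}_m,\boldsymbol{V}_m\}_{m=1}^M$ (matrices of size $D\times D$), maps an input $\boldsymbol{H}=[\boldsymbol{h}_1,\dots,\boldsymbol{h}_n]\in\mathbb{R}^{D\times n}$ to $\tilde{\boldsymbol{H}}=[\tilde{\boldsymbol{h}}_1,\dots,\tilde{\boldsymbol{h}}_n]$ where $$\tilde{\boldsymbol{h}}_t=\boldsymbol{h}_t+\frac{1}{n}\sum_{m=1}^M\sum_{j=1}^n \mathrm{ReLU}\big(\langle \boldsymbol{Q}_m\boldsymbol{h}_t,\boldsymbol{K}_m\boldsymbol{h}_j\rangle\big)\,\boldsymbol{V}_m\boldsymbol{h}_j,\qquad t\in[n].$$ $\boldsymbol{I}_d$ and $\boldsymbol{O}_d$ denote the $d\times d$ identity and zero matrices. *)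

theory Defs
  imports "HOL-Analysis.Analysis"
begin

definition relu :: "real \<Rightarrow> real" where
  "relu a = max 0 a"

definition attn_layer ::
  "nat \<Rightarrow> (nat \<Rightarrow> real^'D::finite^'D) \<Rightarrow> (nat \<Rightarrow> real^'D^'D) \<Rightarrow> (nat \<Rightarrow> real^'D^'D)
   \<Rightarrow> nat \<Rightarrow> (nat \<Rightarrow> real^'D) \<Rightarrow> nat \<Rightarrow> real^'D" where
  "attn_layer M Q K V n H t =
     H t + (1 / real n) *\<^sub>R
       (\<Sum>m\<in>{1..M}. \<Sum>j\<in>{1..n}. relu ((Q m *v H t) \<bullet> (K m *v H j)) *\<^sub>R (V m *v H j))"

text \<open>Stacking two d-vectors into a 2d-vector; coordinates Inl i (top block), Inr i (bottom).\<close>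
definition stack :: "real^'d::finite \<Rightarrow> real^'d \<Rightarrow> real^('d + 'd)" where
  "stack a b = (\<chi> i. case i of Inl k \<Rightarrow> a $ k | Inr k \<Rightarrow> b $ k)"

text \<open>W = [[I_d, O_d],[O_d, O_d]].\<close>
definition Wmat :: "real^('d::finite + 'd)^('d + 'd)" where
  "Wmat = (\<chi> i j. if i = j \<and> isl i then 1 else 0)"

definition outer :: "real^'d::finite \<Rightarrow> real^'d \<Rightarrow> real^'d^'d" where
  "outer x y = (\<chi> i k. x $ i * y $ k)"

definition gram :: "nat \<Rightarrow> (nat \<Rightarrow> real^'d::finite) \<Rightarrow> real^'d^'d" where
  "gram n x = (\<Sum>j\<in>{1..n}. outer (x j) (x j))"

fun Mseq :: "real^'d::finite^'d \<Rightarrow> real \<Rightarrow> nat \<Rightarrow> real^'d^'d" where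
  "Mseq S \<alpha> 0 = \<alpha> *\<^sub>R S"
| "Mseq S \<alpha> (Suc k) = 2 *\<^sub>R Mseq S \<alpha> k - Mseq S \<alpha> k ** S ** Mseq S \<alpha> k"

end

theory Submission
  imports Defs
begin

definition Kmat :: "real^('d::finite + 'd)^('d + 'd)" where
  "Kmat = (\<chi> i j. case (i, j) of (Inl a, Inr b) \<Rightarrow> if a = b then 1 else 0 | _ \<Rightarrow> 0)"

lemma sum_sum_split: fixes f :: "'a::finite + 'b::finite \<Rightarrow> real" shows "(\<Sum>k\<in>UNIV. f k) = (\<Sum>a\<in>UNIV. f (Inl a)) + (\<Sum>b\<in>UNIV. f (Inr b))"
proof -
  have "(\<Sum>k\<in>UNIV. f k) = (\<Sum>k\<in>(UNIV <+> UNIV). f k)" by simp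
  also have "\<dots> = (\<Sum>a\<in>UNIV. f (Inl a)) + (\<Sum>b\<in>UNIV. f (Inr b))"
    using sum.Plus[of "UNIV::'a set" "UNIV::'b set" f] by (simp add: comp_def)
  finally show ?thesis .
qed

lemma W_stack: "Wmat *v stack a b = stack a 0"
  unfolding Wmat_def stack_def matrix_vector_mult_def
  by (auto simp: vec_eq_iff sum_sum_split if_distrib[where f="\<lambda>c. c * _"] cong: if_cong split: sum.splits)

lemma K_stack: "Kmat *v stack a b = stack b 0"
  unfolding Kmat_def stack_def matrix_vector_mult_def
  by (auto simp: vec_eq_iff sum_sum_split if_distrib[where f="\<lambda>c. c * _"] cong: if_cong split: sum.splits)

lemma inner_stack: "stack a b \<bullet> stack c d = a \<bullet> c + b \<bullet> d"
  unfolding stack_def inner_vec_def by (simp add: sum_sum_split)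

lemma stack_add: "stack a b + stack c d = stack (a + c) (b + d)"
  unfolding stack_def by (auto simp: vec_eq_iff split: sum.splits)

lemma stack_scale: "r *\<^sub>R stack a b = stack (r *\<^sub>R a) (r *\<^sub>R b)"
  unfolding stack_def by (auto simp: vec_eq_iff split: sum.splits)

lemma stack_sum: "(\<Sum>j\<in>A. stack (f j) (g j)) = stack (\<Sum>j\<in>A. f j) (\<Sum>j\<in>A. g j)"
  unfolding stack_def by (auto simp: vec_eq_iff sum_component split: sum.splits)

lemma gram_mult: "gram n x *v v = (\<Sum>j\<in>{1..n}. (x j \<bullet> v) *\<^sub>R x j)"
  unfolding gram_def outer_def
  apply (simp add: vec_eq_iff matrix_vector_mult_def inner_vec_def sum_distrib_left
       sum_distrib_right mult_ac)
  apply (intro allI)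
  apply (subst sum.swap)
  apply (simp add: mult_ac)
  done

lemma TST: "(T ** gram n x ** T) *v v = (\<Sum>j\<in>{1..n}. (x j \<bullet> (T *v v)) *\<^sub>R (T *v x j))"
proof -
  have "(T ** gram n x ** T) *v v = T *v (gram n x *v (T *v v))"
    by (simp add: matrix_vector_mul_assoc matrix_mul_assoc)
  also have "\<dots> = (\<Sum>j\<in>{1..n}. (x j \<bullet> (T *v v)) *\<^sub>R (T *v x j))"
    unfolding gram_mult
    using linear_sum[OF matrix_vector_mul_linear[of T]]
    by (simp add: linear_sum[OF matrix_vector_mul_linear] matrix_vector_mult_scaleR)
  finally show ?thesis .
qed

lemma relu_diff: "relu a - relu (-a) = a" unfolding relu_def by auto

lemma scaleR_mv: "(c *\<^sub>R A) *v v = c *\<^sub>R (A *v (v::real^'n::finite))"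
  by (simp add: vec_eq_iff matrix_vector_mult_def sum_distrib_left mult_ac)

lemma neg_mv: "(- A) *v v = - (A *v (v::real^'n::finite))"
  by (simp add: vec_eq_iff matrix_vector_mult_def sum_negf)

lemma stack_neg: "- stack a b = stack (-a) (-b)"
  unfolding stack_def by (auto simp: vec_eq_iff split: sum.splits)

definition QQ :: "nat \<Rightarrow> real^('d::finite + 'd)^('d + 'd)" where
  "QQ m = (if m = 1 then Wmat else (-1) *\<^sub>R Wmat)"
definition KK :: "nat \<Rightarrow> real^('d::finite + 'd)^('d + 'd)" where
  "KK m = Kmat"
definition VV :: "nat \<Rightarrow> nat \<Rightarrow> real^('d::finite + 'd)^('d + 'd)" where
  "VV n m = (if m = 1 then (- (real n / 2)) *\<^sub>R Wmat else (real n / 2) *\<^sub>R Wmat)"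

lemma layer:
  assumes "n \<ge> 1"
  shows "attn_layer 2 QQ KK (VV n) n (\<lambda>j. stack (T *v x j) (x j)) t
     = stack ((T - (1/2) *\<^sub>R (T ** gram n x ** T)) *v x t) (x t)"
proof -
  define a where "a j = x j \<bullet> (T *v x t)" for j
  have two: "{1..2::nat} = {1,2}" by auto
  have h: "(\<Sum>j\<in>{1..n}. relu ((QQ m *v stack (T *v x t) (x t)) \<bullet> (KK m *v stack (T *v x j) (x j))) *\<^sub>R
             (VV n m *v stack (T *v x j) (x j)))
      = (if m = 1 then (\<Sum>j\<in>{1..n}. (relu (a j) * (- (real n / 2))) *\<^sub>R stack (T *v x j) 0)
         else (\<Sum>j\<in>{1..n}. (relu (- a j) * (real n / 2)) *\<^sub>R stack (T *v x j) 0))" for m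
    by (simp add: QQ_def KK_def VV_def scaleR_mv neg_mv stack_neg W_stack K_stack inner_stack a_def inner_commute
        stack_scale)
  have s: "(\<Sum>m\<in>{1..2}. \<Sum>j\<in>{1..n}. relu ((QQ m *v stack (T *v x t) (x t)) \<bullet> (KK m *v stack (T *v x j) (x j))) *\<^sub>R
             (VV n m *v stack (T *v x j) (x j)))
       = (\<Sum>j\<in>{1..n}. (- (real n / 2) * a j) *\<^sub>R stack (T *v x j) 0)"
  proof -
    have per: "(relu (a j) * (- (real n / 2))) *\<^sub>R w + (relu (- a j) * (real n / 2)) *\<^sub>R w
        = (- (real n / 2) * a j) *\<^sub>R w" for j and w :: "'v::real_vector"
    proof -
      have "relu (a j) * (- (real n / 2)) + relu (- a j) * (real n / 2) = - (real n / 2) * a j"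
        using relu_diff[of "a j"] by (simp add: algebra_simps)
      then show ?thesis by (metis scaleR_add_left)
    qed
    have e: "(\<Sum>m\<in>{1,2::nat}. g m) = g 1 + g 2" for g :: "nat \<Rightarrow> 'v::real_vector" by simp
    have "(\<Sum>j\<in>{1..n}. (relu (a j) * (- (real n / 2))) *\<^sub>R stack (T *v x j) 0)
        + (\<Sum>j\<in>{1..n}. (relu (- a j) * (real n / 2)) *\<^sub>R stack (T *v x j) 0)
        = (\<Sum>j\<in>{1..n}. (- (real n / 2) * a j) *\<^sub>R stack (T *v x j) 0)"
      by (simp only: sum.distrib[symmetric] per)
    then show ?thesis unfolding two e h by simp
  qed
  have n0: "real n \<noteq> 0" using assms by simp
  have "(1 / real n) *\<^sub>R (\<Sum>j\<in>{1..n}. (- (real n / 2) * a j) *\<^sub>R stack (T *v x j) 0)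
      = stack ((- 1/2) *\<^sub>R ((T ** gram n x ** T) *v x t)) 0"
  proof -
    have c: "(1 / real n) * (- (real n / 2) * a j) = (- 1/2) * a j" for j using n0 by simp
    show ?thesis
      unfolding TST scaleR_sum_right scaleR_scaleR stack_scale stack_sum scaleR_zero_right sum.neutral_const c
      by (simp add: a_def)
  qed
  then show ?thesis
    unfolding attn_layer_def s
    by (simp add: stack_add matrix_vector_mult_diff_rdistrib scaleR_mv)
qed

lemma transpose_diff': "transpose (A - B) = transpose A - transpose (B::real^'n::finite^'m::finite)"
  by (simp add: transpose_def vec_eq_iff)

lemma gram_sym: "transpose (gram n x) = gram n x"
  by (simp add: transpose_def gram_def outer_def vec_eq_iff sum_component mult.commute)

lemma step_sym: "transpose T = T \<Longrightarrow> transpose (2 *\<^sub>R T - T ** gram n x ** T) = 2 *\<^sub>R T - T ** gram n x ** T"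
  by (simp add: transpose_diff' transpose_scalar matrix_transpose_mul gram_sym matrix_mul_assoc)

lemma layerW:
  assumes "n \<ge> 1"
  shows "attn_layer 2 QQ KK (VV n) n (\<lambda>j. stack (T *v x j) (x j)) t
      + Wmat *v attn_layer 2 QQ KK (VV n) n (\<lambda>j. stack (T *v x j) (x j)) t
     = stack ((2 *\<^sub>R T - T ** gram n x ** T) *v x t) (x t)"
proof -
  have e: "2 *\<^sub>R T - T ** gram n x ** T = (T - (1/2) *\<^sub>R (T ** gram n x ** T)) + (T - (1/2) *\<^sub>R (T ** gram n x ** T))"
    by (simp add: vec_eq_iff)
  show ?thesis
    unfolding layer[OF assms] W_stack stack_add e matrix_vector_mult_add_rdistrib by simp
qed

lemma iter:
  assumes "n \<ge> 1"
  shows "((\<lambda>H j. attn_layer 2 QQ KK (VV n) n H j + Wmat *v attn_layer 2 QQ KK (VV n) n H j) ^^ k)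
            (\<lambda>j. stack ((\<alpha> *\<^sub>R gram n x) *v x j) (x j))
         = (\<lambda>j. stack (Mseq (gram n x) \<alpha> k *v x j) (x j))"
proof (induction k)
  case 0
  then show ?case by simp
next
  case (Suc k)
  then show ?case by (simp add: layerW[OF assms])
qed

theorem mainTheorem3:
  fixes n :: nat
  assumes "n \<ge> 1"
  shows "\<exists>Q K V :: nat \<Rightarrow> real^('d::finite + 'd)^('d + 'd).
    \<forall>x :: nat \<Rightarrow> real^'d.
      (\<forall>T :: real^'d^'d. transpose T = T \<longrightarrow>
         (\<forall>t\<in>{1..n}.
            attn_layer 2 Q K V n (\<lambda>j. stack (T *v x j) (x j)) t
              = stack ((T - (1/2) *\<^sub>R (T ** gram n x ** T)) *v x t) (x t)
          \<and> attn_layer 2 Q K V n (\<lambda>j. stack (T *v x j) (x j)) t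
              + Wmat *v attn_layer 2 Q K V n (\<lambda>j. stack (T *v x j) (x j)) t
              = stack ((2 *\<^sub>R T - T ** gram n x ** T) *v x t) (x t))
         \<and> transpose (2 *\<^sub>R T - T ** gram n x ** T) = 2 *\<^sub>R T - T ** gram n x ** T)
    \<and> (\<forall>(\<alpha>::real) (k::nat). \<forall>t\<in>{1..n}.
         ((\<lambda>H j. attn_layer 2 Q K V n H j + Wmat *v attn_layer 2 Q K V n H j) ^^ k)
            (\<lambda>j. stack ((\<alpha> *\<^sub>R gram n x) *v x j) (x j)) t
         = stack (Mseq (gram n x) \<alpha> k *v x t) (x t))"
  apply (rule exI[of _ QQ], rule exI[of _ KK], rule exI[of _ "VV n"])
  using layer[OF assms] layerW[OF assms] step_sym iter[OF assms, THEN fun_cong] by blast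

end
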